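(* Let $P$ be a real signed permutation matrix (of any size $n\times n$) all of whose eigenvalues lie in the closed left half-plane $\{z\in\mathbb{C}:\operatorname{Re} z\le 0\}$. Then $P = R - E$, where $R$ is a real skew-symmetric matrix ($R^T=-R$) and $E$ is a diagonal matrix each of whose diagonal entries equals $0$ or $1$.
   Context: A real signed permutation matrix is a square matrix with all entries in $\{-1,0,+1\}$ having exactly one nonzero entry in each row and in each column. *)

theory Defs
  imports "Jordan_Normal_Form.Char_Poly"
begin

definition signed_perm_mat :: "real mat \<Rightarrow> bool" where
  "signed_perm_mat P \<longleftrightarrow>
     dim_row P = dim_col P \<and>
     (\<forall>i<dim_row P. \<forall>j<dim_col P. P $$ (i,j) \<in> {-1, 0, 1}) \<and>
     (\<forall>i<dim_row P. \<exists>!j. j < dim_col P \<and> P $$ (i,j) \<noteq> 0) \<and>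
     (\<forall>j<dim_col P. \<exists>!i. i < dim_row P \<and> P $$ (i,j) \<noteq> 0)"

end

theory Submission
  imports Defs
begin

lemma cyc_eig:
  fixes P :: "real mat" and \<sigma> :: "nat \<Rightarrow> nat" and l :: complex
  assumes P: "P \<in> carrier_mat n n"
    and sig: "\<And>r. r<n \<Longrightarrow> \<sigma> r < n"
    and zero: "\<And>r c. r<n \<Longrightarrow> c<n \<Longrightarrow> c \<noteq> \<sigma> r \<Longrightarrow> P$$(r,c) = 0"
    and pm: "\<And>r. r<n \<Longrightarrow> P$$(r,\<sigma> r) = 1 \<or> P$$(r,\<sigma> r) = -1"
    and inj: "\<And>a b. a<n \<Longrightarrow> b<n \<Longrightarrow> \<sigma> a = \<sigma> b \<Longrightarrow> a = b"
    and i: "i<n" and k: "0<k" "(\<sigma>^^k) i = i"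
    and dist: "\<And>a b. a<b \<Longrightarrow> b<k \<Longrightarrow> (\<sigma>^^a) i \<noteq> (\<sigma>^^b) i"
    and lam: "l^k * (\<Prod>t<k. complex_of_real (P$$((\<sigma>^^t) i, \<sigma>((\<sigma>^^t) i)))) = 1"
  shows "eigenvalue (map_mat complex_of_real P) l"
proof -
  define A where "A = map_mat complex_of_real P"
  define s where "s t = complex_of_real (P$$((\<sigma>^^t) i, \<sigma>((\<sigma>^^t) i)))" for t
  define c where "c m = l^m * (\<Prod>t<m. s t)" for m
  have orb: "(\<sigma>^^m) i < n" for m by (induction m) (auto simp: i sig)
  have cS: "c (Suc m) = l * s m * c m" for m by (simp add: c_def mult_ac)
  have ck: "c k = 1" using lam by (simp add: c_def s_def)
  have s2: "s m * s m = 1" for m using pm[OF orb[of m]] by (auto simp: s_def)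
  have uniq: "(THE m. m<k \<and> (\<sigma>^^m) i = (\<sigma>^^a) i) = a" if "a<k" for a
  proof (rule the_equality)
    show "a < k \<and> (\<sigma> ^^ a) i = (\<sigma> ^^ a) i" using that by simp
    fix m assume "m < k \<and> (\<sigma> ^^ m) i = (\<sigma> ^^ a) i"
    then show "m = a" using dist[of m a] dist[of a m] that by (cases m a rule: linorder_cases) auto
  qed
  define v where "v = vec n (\<lambda>r. if \<exists>m<k. (\<sigma>^^m) i = r then c (THE m. m<k \<and> (\<sigma>^^m) i = r) else 0)"
  have vorb: "v $ ((\<sigma>^^a) i) = c a" if "a<k" for a
    using that orb[of a] uniq[OF that] by (auto simp: v_def)
  have vnot: "v $ r = 0" if "r<n" "\<not>(\<exists>m<k. (\<sigma>^^m) i = r)" for r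
    using that by (auto simp: v_def)
  have clos: "\<not>(\<exists>m<k. (\<sigma>^^m) i = \<sigma> r)" if "r<n" "\<not>(\<exists>m<k. (\<sigma>^^m) i = r)" for r
  proof
    assume "\<exists>m<k. (\<sigma>^^m) i = \<sigma> r"
    then obtain m where m: "m<k" "(\<sigma>^^m) i = \<sigma> r" by blast
    show False
    proof (cases m)
      case 0
      have "\<sigma> ((\<sigma>^^(k-1)) i) = (\<sigma>^^k) i"
        using k(1) by (metis Suc_diff_1 comp_apply funpow.simps(2))
      then have "\<sigma> ((\<sigma>^^(k-1)) i) = \<sigma> r" using m 0 k by simp
      then have "(\<sigma>^^(k-1)) i = r" using inj orb that(1) by blast
      moreover have "k-1<k" using k(1) by simp
      ultimately show False using that(2) by blast
    next
      case (Suc m')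
      then have "\<sigma> ((\<sigma>^^m') i) = \<sigma> r" using m by simp
      then have "(\<sigma>^^m') i = r" using inj orb that(1) by blast
      then show False using that(2) m Suc by (metis Suc_lessD)
    qed
  qed
  have dimA: "dim_row A = n" "dim_col A = n" using P by (auto simp: A_def)
  have rowp: "(A *\<^sub>v v) $ r = A $$ (r, \<sigma> r) * v $ (\<sigma> r)" if r: "r<n" for r
  proof -
    have "(A *\<^sub>v v) $ r = (\<Sum>j<n. A $$ (r,j) * v $ j)"
      using r dimA by (simp add: scalar_prod_def v_def atLeast0LessThan)
    also have "\<dots> = A $$ (r, \<sigma> r) * v $ (\<sigma> r) + (\<Sum>j\<in>{..<n}-{\<sigma> r}. A $$ (r,j) * v $ j)"
      using sig[OF r] by (subst sum.remove[of _ "\<sigma> r"]) auto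
    also have "(\<Sum>j\<in>{..<n}-{\<sigma> r}. A $$ (r,j) * v $ j) = 0"
      using zero[OF r] P r by (intro sum.neutral) (auto simp: A_def)
    finally show ?thesis by simp
  qed
  have Asig: "A $$ ((\<sigma>^^m) i, \<sigma> ((\<sigma>^^m) i)) = s m" for m
    using P orb[of m] sig[OF orb[of m]] by (simp add: A_def s_def)
  have "eigenvector A v l"
    unfolding eigenvector_def
  proof (intro conjI)
    show "v \<in> carrier_vec (dim_row A)" using dimA by (simp add: v_def)
    have "v $ i = 1" using vorb[of 0] k by (simp add: c_def)
    then show "v \<noteq> 0\<^sub>v (dim_row A)" using dimA i by auto
    show "A *\<^sub>v v = l \<cdot>\<^sub>v v"
    proof (rule eq_vecI)
      show "dim_vec (A *\<^sub>v v) = dim_vec (l \<cdot>\<^sub>v v)" using dimA by (simp add: v_def)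
      fix r assume "r < dim_vec (l \<cdot>\<^sub>v v)"
      then have r: "r<n" by (simp add: v_def)
      show "(A *\<^sub>v v) $ r = (l \<cdot>\<^sub>v v) $ r"
      proof (cases "\<exists>m<k. (\<sigma>^^m) i = r")
        case True
        then obtain m where m: "m<k" "(\<sigma>^^m) i = r" by blast
        have lhs: "(A *\<^sub>v v) $ r = s m * v $ ((\<sigma>^^(Suc m)) i)"
          using rowp[OF r] m Asig[of m] by simp
        have rhs: "(l \<cdot>\<^sub>v v) $ r = l * c m" proof -
          have "dim_vec v = n" by (simp add: v_def)
          then show ?thesis using r m vorb[of m] by simp
        qed
        have "v $ ((\<sigma>^^(Suc m)) i) = c (Suc m)"
        proof (cases "Suc m < k")
          case True then show ?thesis by (rule vorb)
        next
          case False
          then have "Suc m = k" using m by simp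
          then show ?thesis using vorb[of 0] k ck by (simp add: c_def)
        qed
        then have "(A *\<^sub>v v) $ r = s m * s m * l * c m" using lhs cS by (simp add: mult_ac)
        then show ?thesis using rhs s2 by simp
      next
        case False
        have "(A *\<^sub>v v) $ r = 0" using rowp[OF r] vnot[OF sig[OF r] clos[OF r False]] by simp
        then show ?thesis using vnot[OF r False] r by (simp add: v_def)
      qed
    qed
  qed
  then show ?thesis unfolding eigenvalue_def A_def by blast
qed


lemma period:
  fixes \<sigma> :: "nat \<Rightarrow> nat"
  assumes sig: "\<And>r. r<n \<Longrightarrow> \<sigma> r < n"
    and inj: "\<And>a b. a<n \<Longrightarrow> b<n \<Longrightarrow> \<sigma> a = \<sigma> b \<Longrightarrow> a = b"
    and i: "i<n"
  shows "\<exists>k>0. (\<sigma>^^k) i = i \<and> (\<forall>a b. a<b \<longrightarrow> b<k \<longrightarrow> (\<sigma>^^a) i \<noteq> (\<sigma>^^b) i)"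
proof -
  have orb: "(\<sigma>^^m) x < n" if "x<n" for m x using that by (induction m) (auto simp: sig)
  have cancel: "x = y" if "(\<sigma>^^a) x = (\<sigma>^^a) y" "x<n" "y<n" for a x y
    using that
  proof (induction a)
    case 0 then show ?case by simp
  next
    case (Suc a)
    then have "\<sigma> ((\<sigma>^^a) x) = \<sigma> ((\<sigma>^^a) y)" by simp
    then have "(\<sigma>^^a) x = (\<sigma>^^a) y" using inj orb Suc.prems by blast
    then show ?case using Suc by blast
  qed
  have spl: "(\<sigma>^^b) i = (\<sigma>^^a) ((\<sigma>^^(b-a)) i)" if "a \<le> b" for a b
    using that by (metis funpow_add le_add_diff_inverse comp_apply)
  have bk: "(\<sigma>^^(b-a)) i = i" if "a \<le> b" "(\<sigma>^^a) i = (\<sigma>^^b) i" for a b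
    using cancel[of a "(\<sigma>^^(b-a)) i" i] spl[OF that(1)] that(2) orb i by simp
  have "\<not> inj_on (\<lambda>m. (\<sigma>^^m) i) {..n}"
  proof
    assume "inj_on (\<lambda>m. (\<sigma>^^m) i) {..n}"
    moreover have "(\<lambda>m. (\<sigma>^^m) i) ` {..n} \<subseteq> {..<n}" using orb i by auto
    ultimately have "card {..n} \<le> card {..<n}" by (intro card_inj_on_le) auto
    then show False by simp
  qed
  then obtain a b where ab: "a \<noteq> b" "(\<sigma>^^a) i = (\<sigma>^^b) i" unfolding inj_on_def by blast
  have ex: "\<exists>k. 0<k \<and> (\<sigma>^^k) i = i"
  proof (cases "a < b")
    case True then show ?thesis using bk[of a b] ab by (intro exI[of _ "b-a"]) auto
  next
    case False then show ?thesis using bk[of b a] ab by (intro exI[of _ "a-b"]) auto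
  qed
  define k where "k = (LEAST k. 0<k \<and> (\<sigma>^^k) i = i)"
  have k: "0<k" "(\<sigma>^^k) i = i" using LeastI_ex[OF ex] by (auto simp: k_def)
  have "(\<sigma>^^a) i \<noteq> (\<sigma>^^b) i" if "a<b" "b<k" for a b
  proof
    assume "(\<sigma>^^a) i = (\<sigma>^^b) i"
    then have "(\<sigma>^^(b-a)) i = i" using bk that by simp
    moreover have "b-a < k" "0 < b-a" using that by auto
    ultimately show False using not_less_Least[of "b-a" "\<lambda>k. 0<k \<and> (\<sigma>^^k) i = i"] k_def by auto
  qed
  then show ?thesis using k by blast
qed

lemma choose_l:
  assumes "S = 1 \<or> S = -1" "0<k" "S = 1 \<or> 3 \<le> k"
  shows "\<exists>l::complex. l^k * complex_of_real S = 1 \<and> Re l > 0"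
proof (cases "S = 1")
  case True then show ?thesis by (intro exI[of _ 1]) auto
next
  case False
  then have S: "S = -1" "3 \<le> k" using assms by auto
  have "cis (pi / k) ^ k = cis (real k * (pi / k))" by (rule DeMoivre)
  also have "\<dots> = -1" using assms(2) by simp
  finally have e: "cis (pi / k) ^ k = -1" .
  have "pi / k \<le> pi / 3" using S(2) by (intro divide_left_mono) auto
  then have "pi / k < pi / 2" using pi_gt_zero by linarith
  moreover have "0 < pi / k" using assms(2) by simp
  ultimately have "cos (pi / k) > 0" by (intro cos_gt_zero_pi) auto
  then show ?thesis using e S by (intro exI[of _ "cis (pi / k)"]) auto
qed

lemma prod_pm:
  fixes f :: "nat \<Rightarrow> real"
  assumes "\<And>t. f t = 1 \<or> f t = -1"
  shows "(\<Prod>t<k. f t) = 1 \<or> (\<Prod>t<k. f t) = -1"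
proof (induction k)
  case 0 then show ?case by simp
next
  case (Suc k) then show ?case using assms[of k] by auto
qed

lemma no_bad:
  fixes P :: "real mat" and \<sigma> :: "nat \<Rightarrow> nat"
  assumes P: "P \<in> carrier_mat n n"
    and sig: "\<And>r. r<n \<Longrightarrow> \<sigma> r < n"
    and zero: "\<And>r c. r<n \<Longrightarrow> c<n \<Longrightarrow> c \<noteq> \<sigma> r \<Longrightarrow> P$$(r,c) = 0"
    and pm: "\<And>r. r<n \<Longrightarrow> P$$(r,\<sigma> r) = 1 \<or> P$$(r,\<sigma> r) = -1"
    and inj: "\<And>a b. a<n \<Longrightarrow> b<n \<Longrightarrow> \<sigma> a = \<sigma> b \<Longrightarrow> a = b"
    and i: "i<n" and k: "0<k" "(\<sigma>^^k) i = i"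
    and dist: "\<And>a b. a<b \<Longrightarrow> b<k \<Longrightarrow> (\<sigma>^^a) i \<noteq> (\<sigma>^^b) i"
    and ev: "\<forall>z. eigenvalue (map_mat complex_of_real P) z \<longrightarrow> Re z \<le> 0"
    and bad: "(\<Prod>t<k. P$$((\<sigma>^^t) i, \<sigma>((\<sigma>^^t) i))) = 1 \<or> 3 \<le> k"
  shows False
proof -
  define S where "S = (\<Prod>t<k. P$$((\<sigma>^^t) i, \<sigma>((\<sigma>^^t) i)))"
  have orb: "(\<sigma>^^m) i < n" for m by (induction m) (auto simp: i sig)
  have "S = 1 \<or> S = -1" unfolding S_def using pm orb by (intro prod_pm) auto
  moreover have "S = 1 \<or> 3 \<le> k" using bad S_def by simp
  ultimately obtain l where l: "l^k * complex_of_real S = 1" "Re l > 0"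
    using choose_l[of S k] k by blast
  have "l^k * (\<Prod>t<k. complex_of_real (P$$((\<sigma>^^t) i, \<sigma>((\<sigma>^^t) i)))) = 1"
  proof -
    have eq: "complex_of_real S = (\<Prod>t<k. complex_of_real (P$$((\<sigma>^^t) i, \<sigma>((\<sigma>^^t) i))))"
      unfolding S_def by (rule of_real_prod)
    show ?thesis using l(1) unfolding eq .
  qed
  then have "eigenvalue (map_mat complex_of_real P) l"
  proof (rule cyc_eig[of P n \<sigma>, rotated -1])
    show "P \<in> carrier_mat n n" by (rule P)
    show "\<And>r. r<n \<Longrightarrow> \<sigma> r < n" by (rule sig)
    show "\<And>r c. r<n \<Longrightarrow> c<n \<Longrightarrow> c \<noteq> \<sigma> r \<Longrightarrow> P$$(r,c) = 0" by (rule zero)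
    show "\<And>r. r<n \<Longrightarrow> P$$(r,\<sigma> r) = 1 \<or> P$$(r,\<sigma> r) = -1" by (rule pm)
    show "\<And>a b. a<n \<Longrightarrow> b<n \<Longrightarrow> \<sigma> a = \<sigma> b \<Longrightarrow> a = b" by (rule inj)
    show "i<n" by (rule i)
    show "0<k" by (rule k(1))
    show "(\<sigma>^^k) i = i" by (rule k(2))
    show "\<And>a b. a<b \<Longrightarrow> b<k \<Longrightarrow> (\<sigma>^^a) i \<noteq> (\<sigma>^^b) i" by (rule dist)
  qed
  then show False using ev l(2) by force
qed

lemma ex1_two: "\<exists>!x. Q x \<Longrightarrow> Q a \<Longrightarrow> Q b \<Longrightarrow> a = b" by blast

lemma A_lem:
  fixes P :: "real mat" and \<sigma> :: "nat \<Rightarrow> nat"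
  assumes P: "P \<in> carrier_mat n n"
    and sig: "\<And>r. r<n \<Longrightarrow> \<sigma> r < n"
    and zero: "\<And>r c. r<n \<Longrightarrow> c<n \<Longrightarrow> c \<noteq> \<sigma> r \<Longrightarrow> P$$(r,c) = 0"
    and pm: "\<And>r. r<n \<Longrightarrow> P$$(r,\<sigma> r) = 1 \<or> P$$(r,\<sigma> r) = -1"
    and inj: "\<And>a b. a<n \<Longrightarrow> b<n \<Longrightarrow> \<sigma> a = \<sigma> b \<Longrightarrow> a = b"
    and ev: "\<forall>z. eigenvalue (map_mat complex_of_real P) z \<longrightarrow> Re z \<le> 0"
    and ent: "\<And>a b. a<n \<Longrightarrow> b<n \<Longrightarrow> P$$(a,b) \<in> {-1,0,1}"
    and hs: "\<And>r. r<n \<Longrightarrow> \<sigma> r < n \<and> P$$(r,\<sigma> r) \<noteq> 0"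
    and r: "r<n"
  shows "P$$(r,r) \<noteq> 1"
proof
  assume h: "P$$(r,r) = 1"
  then have sr: "\<sigma> r = r" using zero[OF r r] by fastforce
  show False
  proof (rule no_bad[of P n \<sigma> r 1])
    show "P \<in> carrier_mat n n" by (rule P)
    show "\<And>r. r<n \<Longrightarrow> \<sigma> r < n" by (rule sig)
    show "\<And>r c. r<n \<Longrightarrow> c<n \<Longrightarrow> c \<noteq> \<sigma> r \<Longrightarrow> P$$(r,c) = 0" by (rule zero)
    show "\<And>r. r<n \<Longrightarrow> P$$(r,\<sigma> r) = 1 \<or> P$$(r,\<sigma> r) = -1" by (rule pm)
    show "\<And>a b. a<n \<Longrightarrow> b<n \<Longrightarrow> \<sigma> a = \<sigma> b \<Longrightarrow> a = b" by (rule inj)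
    show "\<forall>z. eigenvalue (map_mat complex_of_real P) z \<longrightarrow> Re z \<le> 0" by (rule ev)
    show "r<n" by (rule r)
    show "0 < (1::nat)" by simp
    show "(\<sigma>^^1) r = r" using sr by simp
    show "\<And>a b. a<b \<Longrightarrow> b<1 \<Longrightarrow> (\<sigma>^^a) r \<noteq> (\<sigma>^^b) r" by simp
    show "(\<Prod>t<1. P$$((\<sigma>^^t) r, \<sigma>((\<sigma>^^t) r))) = 1 \<or> 3 \<le> (1::nat)" using sr h by simp
  qed
qed

lemma B_lem:
  fixes P :: "real mat" and \<sigma> :: "nat \<Rightarrow> nat"
  assumes P: "P \<in> carrier_mat n n"
    and sig: "\<And>r. r<n \<Longrightarrow> \<sigma> r < n"
    and zero: "\<And>r c. r<n \<Longrightarrow> c<n \<Longrightarrow> c \<noteq> \<sigma> r \<Longrightarrow> P$$(r,c) = 0"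
    and pm: "\<And>r. r<n \<Longrightarrow> P$$(r,\<sigma> r) = 1 \<or> P$$(r,\<sigma> r) = -1"
    and inj: "\<And>a b. a<n \<Longrightarrow> b<n \<Longrightarrow> \<sigma> a = \<sigma> b \<Longrightarrow> a = b"
    and ev: "\<forall>z. eigenvalue (map_mat complex_of_real P) z \<longrightarrow> Re z \<le> 0"
    and ent: "\<And>a b. a<n \<Longrightarrow> b<n \<Longrightarrow> P$$(a,b) \<in> {-1,0,1}"
    and hs: "\<And>r. r<n \<Longrightarrow> \<sigma> r < n \<and> P$$(r,\<sigma> r) \<noteq> 0"
    and ij: "i<n" "j<n" "i \<noteq> j" "P$$(i,j) \<noteq> 0"
  shows "P$$(j,i) = - P$$(i,j)"
proof (rule ccontr)
  assume nc: "P$$(j,i) \<noteq> - P$$(i,j)"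
  have si: "\<sigma> i = j" using zero[OF ij(1,2)] ij(4) by blast
  have "\<exists>k>0. (\<sigma>^^k) i = i \<and> (\<forall>a b. a<b \<longrightarrow> b<k \<longrightarrow> (\<sigma>^^a) i \<noteq> (\<sigma>^^b) i)"
  proof (rule period[of n \<sigma> i])
    show "\<And>r. r<n \<Longrightarrow> \<sigma> r < n" by (rule sig)
    show "\<And>a b. a<n \<Longrightarrow> b<n \<Longrightarrow> \<sigma> a = \<sigma> b \<Longrightarrow> a = b" by (rule inj)
    show "i<n" by (rule ij(1))
  qed
  then obtain k where k: "0<k" "(\<sigma>^^k) i = i" "\<forall>a b. a<b \<longrightarrow> b<k \<longrightarrow> (\<sigma>^^a) i \<noteq> (\<sigma>^^b) i"
    by blast
  have k1: "k \<noteq> 1" using k si ij by auto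
  have "(\<Prod>t<k. P$$((\<sigma>^^t) i, \<sigma>((\<sigma>^^t) i))) = 1 \<or> 3 \<le> k"
  proof (cases "k = 2")
    case True
    then have sj: "\<sigma> j = i" using k si by (simp add: numeral_2_eq_2)
    have "P$$(j,i) \<noteq> 0" using hs[OF ij(2)] sj by simp
    then have "P$$(j,i) = P$$(i,j)" using ent[OF ij(2,1)] ent[OF ij(1,2)] nc ij(4) by auto
    moreover have "P$$(i,j) * P$$(i,j) = 1" using pm[OF ij(1)] si by auto
    ultimately show ?thesis using True si sj by (simp add: numeral_2_eq_2 lessThan_Suc)
  next
    case False then show ?thesis using k1 k(1) by linarith
  qed
  then show False
  proof (rule no_bad[of P n \<sigma> i k, rotated -1])
    show "P \<in> carrier_mat n n" by (rule P)
    show "\<And>r. r<n \<Longrightarrow> \<sigma> r < n" by (rule sig)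
    show "\<And>r c. r<n \<Longrightarrow> c<n \<Longrightarrow> c \<noteq> \<sigma> r \<Longrightarrow> P$$(r,c) = 0" by (rule zero)
    show "\<And>r. r<n \<Longrightarrow> P$$(r,\<sigma> r) = 1 \<or> P$$(r,\<sigma> r) = -1" by (rule pm)
    show "\<And>a b. a<n \<Longrightarrow> b<n \<Longrightarrow> \<sigma> a = \<sigma> b \<Longrightarrow> a = b" by (rule inj)
    show "\<forall>z. eigenvalue (map_mat complex_of_real P) z \<longrightarrow> Re z \<le> 0" by (rule ev)
    show "i<n" by (rule ij(1))
    show "0<k" by (rule k(1))
    show "(\<sigma>^^k) i = i" by (rule k(2))
    show "\<And>a b. a<b \<Longrightarrow> b<k \<Longrightarrow> (\<sigma>^^a) i \<noteq> (\<sigma>^^b) i" using k(3) by blast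
  qed
qed

lemma t_T: fixes P R :: "real mat" assumes P: "P \<in> carrier_mat n n"
  and Rc: "R \<in> carrier_mat n n"
  and Rij: "\<And>a b. a<n \<Longrightarrow> b<n \<Longrightarrow> R $$ (a,b) = P$$(a,b) + (if a = b \<and> P$$(a,a) = -1 then 1 else 0)"
  and A: "\<And>r. r<n \<Longrightarrow> P$$(r,r) \<noteq> 1"
  and B: "\<And>i j. i<n \<Longrightarrow> j<n \<Longrightarrow> i \<noteq> j \<Longrightarrow> P$$(i,j) \<noteq> 0 \<Longrightarrow> P$$(j,i) = - P$$(i,j)"
  and ent: "\<And>a b. a<n \<Longrightarrow> b<n \<Longrightarrow> P$$(a,b) \<in> {-1,0,1}"
  shows "transpose_mat R = - R"
  proof (rule eq_matI)
    fix a b assume "a < dim_row (- R)" "b < dim_col (- R)"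
    then have ab: "a<n" "b<n" using Rc by auto
    have t1: "transpose_mat R $$ (a,b) = R $$ (b,a)" using ab Rc by simp
    have t2: "(- R) $$ (a,b) = - R $$ (a,b)" using ab Rc by simp
    have "R $$ (b,a) = - R $$ (a,b)"
    proof (cases "a = b")
      case True
      have "P$$(a,a) = 0 \<or> P$$(a,a) = -1" using A[OF ab(1)] ent[OF ab(1) ab(1)] by auto
      then show ?thesis using True Rij[OF ab] by auto
    next
      case False
      have "P$$(b,a) = - P$$(a,b)"
      proof (cases "P$$(a,b) = 0")
        case True
        show ?thesis
        proof (cases "P$$(b,a) = 0")
          case True2: True
          show ?thesis using True True2 by simp
        next
          case False2: False
          show ?thesis using B[OF ab(2,1) _ False2] False by simp
        qed
      next
        case False2: False
        then show ?thesis using B[OF ab _ False2] False by simp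
      qed
      then show ?thesis using Rij[OF ab] Rij[OF ab(2,1)] False by simp
    qed
    then show "transpose_mat R $$ (a,b) = (- R) $$ (a,b)" using t1 t2 by simp
  next
    show "dim_row (transpose_mat R) = dim_row (- R)" using Rc by simp
    show "dim_col (transpose_mat R) = dim_col (- R)" using Rc by simp
  qed

lemma t_fin: fixes P R E :: "real mat" assumes Rc: "R \<in> carrier_mat n n" and Ec: "E \<in> carrier_mat n n"
 and T: "transpose_mat R = - R" and D: "diagonal_mat E" and F: "\<forall>i<n. E $$ (i,i) = 0 \<or> E $$ (i,i) = 1" and PE: "P = R - E"
 shows "\<exists>R E. R \<in> carrier_mat n n \<and> E \<in> carrier_mat n n \<and>
           transpose_mat R = - R \<and>
           diagonal_mat E \<and> (\<forall>i<n. E $$ (i,i) = 0 \<or> E $$ (i,i) = 1) \<and>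
           P = R - E"
proof -
  have "R \<in> carrier_mat n n \<and> E \<in> carrier_mat n n \<and> transpose_mat R = - R \<and>
           diagonal_mat E \<and> (\<forall>i<n. E $$ (i,i) = 0 \<or> E $$ (i,i) = 1) \<and> P = R - E"
    using Rc Ec T D F PE by simp
  then show ?thesis by (rule exI[of _ R, OF exI[of _ E]])
qed

lemma sigma_ex:
  fixes P :: "real mat"
  assumes P: "P \<in> carrier_mat n n" and sp: "signed_perm_mat P"
  shows "\<exists>\<sigma>. (\<forall>r<n. \<sigma> r < n \<and> P$$(r,\<sigma> r) \<noteq> 0) \<and> (\<forall>r<n. \<forall>c<n. c \<noteq> \<sigma> r \<longrightarrow> P$$(r,c) = 0)
     \<and> (\<forall>a<n. \<forall>b<n. \<sigma> a = \<sigma> b \<longrightarrow> a = b)"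
proof -
  have dims: "dim_row P = n" "dim_col P = n" using P by auto
  have rowu: "\<And>a. a<n \<Longrightarrow> \<exists>!j. j<n \<and> P$$(a,j) \<noteq> 0"
    and colu: "\<And>b. b<n \<Longrightarrow> \<exists>!i. i<n \<and> P$$(i,b) \<noteq> 0"
    using sp dims unfolding signed_perm_mat_def by auto
  define \<sigma> where "\<sigma> r = (THE c. c<n \<and> P$$(r,c) \<noteq> 0)" for r
  have hs: "\<sigma> r < n \<and> P$$(r,\<sigma> r) \<noteq> 0" if "r<n" for r
    using theI'[OF rowu[OF that]] by (simp add: \<sigma>_def)
  have zero: "P$$(r,c) = 0" if "r<n" "c<n" "c \<noteq> \<sigma> r" for r c
  proof (rule ccontr)
    assume "P$$(r,c) \<noteq> 0"
    then show False
      using ex1_two[OF rowu[OF that(1)], of c "\<sigma> r"] hs[OF that(1)] that by simp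
  qed
  have inj: "a = b" if "a<n" "b<n" "\<sigma> a = \<sigma> b" for a b
    using ex1_two[OF colu[OF conjunct1[OF hs[OF that(1)]]], of a b] hs[OF that(1)] hs[OF that(2)] that by simp
  show ?thesis using hs zero inj by blast
qed

theorem lemma1:
  fixes P :: "real mat" and n :: nat
  assumes "P \<in> carrier_mat n n"
    and "signed_perm_mat P"
    and "\<forall>z. eigenvalue (map_mat complex_of_real P) z \<longrightarrow> Re z \<le> 0"
  shows "\<exists>R E. R \<in> carrier_mat n n \<and> E \<in> carrier_mat n n \<and>
           transpose_mat R = - R \<and>
           diagonal_mat E \<and> (\<forall>i<n. E $$ (i,i) = 0 \<or> E $$ (i,i) = 1) \<and>
           P = R - E"
proof -
  note P = assms(1) and ev = assms(3)
  have dims: "dim_row P = n" "dim_col P = n" using P by auto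
  have ent: "\<And>a b. a<n \<Longrightarrow> b<n \<Longrightarrow> P$$(a,b) \<in> {-1,0,1}"
    using assms(2) dims unfolding signed_perm_mat_def by auto
  obtain \<sigma> where s1: "\<forall>r<n. \<sigma> r < n \<and> P$$(r,\<sigma> r) \<noteq> 0"
     and s2: "\<forall>r<n. \<forall>c<n. c \<noteq> \<sigma> r \<longrightarrow> P$$(r,c) = 0"
     and s3: "\<forall>a<n. \<forall>b<n. \<sigma> a = \<sigma> b \<longrightarrow> a = b"
    using sigma_ex[OF assms(1,2)] by blast
  have hs: "\<And>r. r<n \<Longrightarrow> \<sigma> r < n \<and> P$$(r,\<sigma> r) \<noteq> 0" using s1 by blast
  have sig: "\<And>r. r<n \<Longrightarrow> \<sigma> r < n" using s1 by blast
  have zero: "\<And>r c. r<n \<Longrightarrow> c<n \<Longrightarrow> c \<noteq> \<sigma> r \<Longrightarrow> P$$(r,c) = 0" using s2 by blast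
  have inj: "\<And>a b. a<n \<Longrightarrow> b<n \<Longrightarrow> \<sigma> a = \<sigma> b \<Longrightarrow> a = b" using s3 by blast
  have pm: "P$$(r,\<sigma> r) = 1 \<or> P$$(r,\<sigma> r) = -1" if "r<n" for r
    using ent[OF that sig[OF that]] hs[OF that] by auto
  have A: "P$$(r,r) \<noteq> 1" if r: "r<n" for r
    proof (rule A_lem[of P n \<sigma>])
      show "P \<in> carrier_mat n n" by (rule P)
      show "\<And>r. r<n \<Longrightarrow> \<sigma> r < n" by (rule sig)
      show "\<And>r c. r<n \<Longrightarrow> c<n \<Longrightarrow> c \<noteq> \<sigma> r \<Longrightarrow> P$$(r,c) = 0" by (rule zero)
      show "\<And>r. r<n \<Longrightarrow> P$$(r,\<sigma> r) = 1 \<or> P$$(r,\<sigma> r) = -1" by (rule pm)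
      show "\<And>a b. a<n \<Longrightarrow> b<n \<Longrightarrow> \<sigma> a = \<sigma> b \<Longrightarrow> a = b" by (rule inj)
      show "\<forall>z. eigenvalue (map_mat complex_of_real P) z \<longrightarrow> Re z \<le> 0" by (rule ev)
      show "\<And>a b. a<n \<Longrightarrow> b<n \<Longrightarrow> P$$(a,b) \<in> {-1,0,1}" by (rule ent)
      show "\<And>r. r<n \<Longrightarrow> \<sigma> r < n \<and> P$$(r,\<sigma> r) \<noteq> 0" by (rule hs)
      show "r<n" by (rule r)
    qed
  have B: "P$$(j,i) = - P$$(i,j)" if ij: "i<n" "j<n" "i \<noteq> j" "P$$(i,j) \<noteq> 0" for i j
    proof (rule B_lem[of P n \<sigma>])
      show "P \<in> carrier_mat n n" by (rule P)
      show "\<And>r. r<n \<Longrightarrow> \<sigma> r < n" by (rule sig)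
      show "\<And>r c. r<n \<Longrightarrow> c<n \<Longrightarrow> c \<noteq> \<sigma> r \<Longrightarrow> P$$(r,c) = 0" by (rule zero)
      show "\<And>r. r<n \<Longrightarrow> P$$(r,\<sigma> r) = 1 \<or> P$$(r,\<sigma> r) = -1" by (rule pm)
      show "\<And>a b. a<n \<Longrightarrow> b<n \<Longrightarrow> \<sigma> a = \<sigma> b \<Longrightarrow> a = b" by (rule inj)
      show "\<forall>z. eigenvalue (map_mat complex_of_real P) z \<longrightarrow> Re z \<le> 0" by (rule ev)
      show "\<And>a b. a<n \<Longrightarrow> b<n \<Longrightarrow> P$$(a,b) \<in> {-1,0,1}" by (rule ent)
      show "\<And>r. r<n \<Longrightarrow> \<sigma> r < n \<and> P$$(r,\<sigma> r) \<noteq> 0" by (rule hs)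
      show "i<n" by (rule ij(1))
      show "j<n" by (rule ij(2))
      show "i \<noteq> j" by (rule ij(3))
      show "P$$(i,j) \<noteq> 0" by (rule ij(4))
    qed
  define E where "E = mat n n (\<lambda>(a,b). if a = b \<and> P$$(a,a) = -1 then 1 else (0::real))"
  define R where "R = P + E"
  have Ec: "E \<in> carrier_mat n n" by (simp add: E_def)
  have Rc: "R \<in> carrier_mat n n" using P by (simp add: R_def E_def)
  have Rij: "R $$ (a,b) = P$$(a,b) + (if a = b \<and> P$$(a,a) = -1 then 1 else 0)" if "a<n" "b<n" for a b
    using that P by (simp add: R_def E_def)
  have D: "diagonal_mat E" by (auto simp: diagonal_mat_def E_def)
  have F: "\<forall>i<n. E $$ (i,i) = 0 \<or> E $$ (i,i) = 1" by (auto simp: E_def)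
  have PE: "P = R - E"
    by (rule eq_matI) (use P Ec in \<open>auto simp: R_def\<close>)
  have T: "transpose_mat R = - R"
  proof (rule t_T[of P n R])
    show "P \<in> carrier_mat n n" by (rule P)
    show "R \<in> carrier_mat n n" by (rule Rc)
    show "\<And>a b. a<n \<Longrightarrow> b<n \<Longrightarrow> R $$ (a,b) = P$$(a,b) + (if a = b \<and> P$$(a,a) = -1 then 1 else 0)" by (rule Rij)
    show "\<And>r. r<n \<Longrightarrow> P$$(r,r) \<noteq> 1" by (rule A)
    show "\<And>i j. i<n \<Longrightarrow> j<n \<Longrightarrow> i \<noteq> j \<Longrightarrow> P$$(i,j) \<noteq> 0 \<Longrightarrow> P$$(j,i) = - P$$(i,j)" by (rule B)
    show "\<And>a b. a<n \<Longrightarrow> b<n \<Longrightarrow> P$$(a,b) \<in> {-1,0,1}" by (rule ent)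
  qed
  show ?thesis by (rule t_fin[OF Rc Ec T D F PE])
qed

end
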